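(* Let $\mathcal{G}$ and $\mathcal{H}$ be groupoids (not necessarily finite) and let $\phi,\psi\colon\widetilde{S}(\mathcal{G})\to\widetilde{S}(\mathcal{H})$ be morphisms of quasi-schemoids. Then $\phi\simeq\psi$ if and only if there exists a homotopy $\phi\Rightarrow\psi$.
   Context: For a groupoid $\mathcal{H}$, the quasi-schemoid $\widetilde{S}(\mathcal{H})=(\widetilde{\mathcal{H}},S)$ has $ob(\widetilde{\mathcal{H}})=mor(\mathcal{H})$, $\mathrm{Hom}_{\widetilde{\mathcal{H}}}(g,h)=\{(h,g)\}$ if $t(h)=t(g)$ and empty otherwise (composition $(k,h)\circ(h,g)=(k,g)$), and partition $S=\{\mathcal{G}_f\}_{f\in mor(\mathcal{H})}$ with $\mathcal{G}_f=\{(k,l)\mid k^{-1}l=f\}$. A morphism of quasi-schemoids is a functor sending each block of the source partition into some block of the target partition. Product: $(\mathcal{C},S)\times(\mathcal{E},S')=(\mathcal{C}\times\mathcal{E},\{\sigma\times\tau\})$. $[1]$ has objects $0,1$ and one non-identity morphism $0\to1$; $I=([1],\{\{f\}\}_f)$. A homotopy $H\colon F\Rightarrow G$ is a morphism $H\colon(\mathcal{C},S)\times I\to(\mathcal{D},S')$ with $H\circ\varepsilon_0=F$, $H\circ\varepsilon_1=G$ ($\varepsilon_i(a)=(a,i)$, $\varepsilon_i(f)=(f,1_i)$). $F\sim G$ means there is a homotopy $F\Rightarrow G$ or $G\Rightarrow F$; $F\simeq G$ means there is a finite chain $F=F_0\sim F_1\sim\cdots\sim F_n=G$. *)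

theory Defs
  imports Main
begin

record ('o, 'm) cat =
  Ob   :: "'o set"
  Mor  :: "'m set"
  Dom  :: "'m \<Rightarrow> 'o"
  Cod  :: "'m \<Rightarrow> 'o"
  Id   :: "'o \<Rightarrow> 'm"
  Comp :: "'m \<Rightarrow> 'm \<Rightarrow> 'm"   (* Comp C g f = g \<circ> f, defined when Cod f = Dom g *)

definition category :: "('o, 'm) cat \<Rightarrow> bool" where
  "category C \<longleftrightarrow>
     (\<forall>f\<in>Mor C. Dom C f \<in> Ob C \<and> Cod C f \<in> Ob C) \<and>
     (\<forall>a\<in>Ob C. Id C a \<in> Mor C \<and> Dom C (Id C a) = a \<and> Cod C (Id C a) = a) \<and>
     (\<forall>f\<in>Mor C. \<forall>g\<in>Mor C. Cod C f = Dom C g \<longrightarrow>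
        Comp C g f \<in> Mor C \<and> Dom C (Comp C g f) = Dom C f \<and> Cod C (Comp C g f) = Cod C g) \<and>
     (\<forall>f\<in>Mor C. Comp C f (Id C (Dom C f)) = f \<and> Comp C (Id C (Cod C f)) f = f) \<and>
     (\<forall>f\<in>Mor C. \<forall>g\<in>Mor C. \<forall>h\<in>Mor C. Cod C f = Dom C g \<longrightarrow> Cod C g = Dom C h \<longrightarrow>
        Comp C h (Comp C g f) = Comp C (Comp C h g) f)"

definition is_inverse :: "('o, 'm) cat \<Rightarrow> 'm \<Rightarrow> 'm \<Rightarrow> bool" where
  "is_inverse C f g \<longleftrightarrow> g \<in> Mor C \<and> Dom C g = Cod C f \<and> Cod C g = Dom C f \<and>
     Comp C g f = Id C (Dom C f) \<and> Comp C f g = Id C (Cod C f)"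

definition groupoid :: "('o, 'm) cat \<Rightarrow> bool" where
  "groupoid C \<longleftrightarrow> category C \<and> (\<forall>f\<in>Mor C. \<exists>g. is_inverse C f g)"

definition ginv :: "('o, 'm) cat \<Rightarrow> 'm \<Rightarrow> 'm" where
  "ginv C f = (THE g. is_inverse C f g)"

type_synonym ('o, 'm) qschemoid = "('o, 'm) cat \<times> 'm set set"

text \<open>Functors are represented as pairs (object map, morphism map).\<close>
type_synonym ('o1, 'm1, 'o2, 'm2) qfun = "('o1 \<Rightarrow> 'o2) \<times> ('m1 \<Rightarrow> 'm2)"

definition is_functor :: "('o1, 'm1) cat \<Rightarrow> ('o2, 'm2) cat \<Rightarrow> ('o1, 'm1, 'o2, 'm2) qfun \<Rightarrow> bool" where
  "is_functor C D F \<longleftrightarrow>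
     (\<forall>a\<in>Ob C. fst F a \<in> Ob D) \<and>
     (\<forall>f\<in>Mor C. snd F f \<in> Mor D \<and> Dom D (snd F f) = fst F (Dom C f) \<and>
                  Cod D (snd F f) = fst F (Cod C f)) \<and>
     (\<forall>a\<in>Ob C. snd F (Id C a) = Id D (fst F a)) \<and>
     (\<forall>f\<in>Mor C. \<forall>g\<in>Mor C. Cod C f = Dom C g \<longrightarrow>
        snd F (Comp C g f) = Comp D (snd F g) (snd F f))"

definition qs_morphism :: "('o1, 'm1) qschemoid \<Rightarrow> ('o2, 'm2) qschemoid \<Rightarrow> ('o1, 'm1, 'o2, 'm2) qfun \<Rightarrow> bool" where
  "qs_morphism A B F \<longleftrightarrow> is_functor (fst A) (fst B) F \<and>
     (\<forall>\<sigma>\<in>snd A. \<exists>\<tau>\<in>snd B. snd F ` \<sigma> \<subseteq> \<tau>)"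

text \<open>Objects are the morphisms of H; the unique morphism g \<rightarrow> h (when t(g) = t(h)) is the pair (h, g).\<close>
definition tilde_cat :: "('o, 'a) cat \<Rightarrow> ('a, 'a \<times> 'a) cat" where
  "tilde_cat H = \<lparr> Ob = Mor H,
      Mor = {(h, g). h \<in> Mor H \<and> g \<in> Mor H \<and> Cod H h = Cod H g},
      Dom = snd, Cod = fst, Id = (\<lambda>g. (g, g)),
      Comp = (\<lambda>kh hg. (fst kh, snd hg)) \<rparr>"

definition tilde_block :: "('o, 'a) cat \<Rightarrow> 'a \<Rightarrow> ('a \<times> 'a) set" where
  "tilde_block H f = {(k, l) \<in> Mor (tilde_cat H). Comp H (ginv H k) l = f}"

definition tildeS :: "('o, 'a) cat \<Rightarrow> ('a, 'a \<times> 'a) qschemoid" where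
  "tildeS H = (tilde_cat H, {tilde_block H f | f. f \<in> Mor H})"

definition prod_cat :: "('o1, 'm1) cat \<Rightarrow> ('o2, 'm2) cat \<Rightarrow> ('o1 \<times> 'o2, 'm1 \<times> 'm2) cat" where
  "prod_cat C E = \<lparr> Ob = Ob C \<times> Ob E, Mor = Mor C \<times> Mor E,
      Dom = (\<lambda>(f, g). (Dom C f, Dom E g)), Cod = (\<lambda>(f, g). (Cod C f, Cod E g)),
      Id = (\<lambda>(a, b). (Id C a, Id E b)),
      Comp = (\<lambda>(f', g') (f, g). (Comp C f' f, Comp E g' g)) \<rparr>"

definition prod_qs :: "('o1, 'm1) qschemoid \<Rightarrow> ('o2, 'm2) qschemoid \<Rightarrow> ('o1 \<times> 'o2, 'm1 \<times> 'm2) qschemoid" where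
  "prod_qs A B = (prod_cat (fst A) (fst B), {\<sigma> \<times> \<tau> | \<sigma> \<tau>. \<sigma> \<in> snd A \<and> \<tau> \<in> snd B})"

text \<open>[1]: objects False (= 0) and True (= 1); a morphism (a, b) goes from a to b, a \<le> b.\<close>
definition one_cat :: "(bool, bool \<times> bool) cat" where
  "one_cat = \<lparr> Ob = UNIV, Mor = {(a, b). a \<le> b}, Dom = fst, Cod = snd,
      Id = (\<lambda>a. (a, a)), Comp = (\<lambda>bc ab. (fst ab, snd bc)) \<rparr>"

definition I_qs :: "(bool, bool \<times> bool) qschemoid" where
  "I_qs = (one_cat, {{f} | f. f \<in> Mor one_cat})"

definition homotopy ::
  "('o1, 'm1) qschemoid \<Rightarrow> ('o2, 'm2) qschemoid \<Rightarrow> ('o1, 'm1, 'o2, 'm2) qfun \<Rightarrow>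
   ('o1, 'm1, 'o2, 'm2) qfun \<Rightarrow> ('o1 \<times> bool, 'm1 \<times> (bool \<times> bool), 'o2, 'm2) qfun \<Rightarrow> bool" where
  "homotopy A B F G H \<longleftrightarrow> qs_morphism (prod_qs A I_qs) B H \<and>
     (\<forall>a\<in>Ob (fst A). fst H (a, False) = fst F a \<and> fst H (a, True) = fst G a) \<and>
     (\<forall>f\<in>Mor (fst A). snd H (f, Id one_cat False) = snd F f \<and> snd H (f, Id one_cat True) = snd G f)"

definition htp_sim :: "('o1, 'm1) qschemoid \<Rightarrow> ('o2, 'm2) qschemoid \<Rightarrow> ('o1, 'm1, 'o2, 'm2) qfun \<Rightarrow>
   ('o1, 'm1, 'o2, 'm2) qfun \<Rightarrow> bool" where
  "htp_sim A B F G \<longleftrightarrow> (\<exists>H. homotopy A B F G H) \<or> (\<exists>H. homotopy A B G F H)"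

definition htp_equiv :: "('o1, 'm1) qschemoid \<Rightarrow> ('o2, 'm2) qschemoid \<Rightarrow> ('o1, 'm1, 'o2, 'm2) qfun \<Rightarrow>
   ('o1, 'm1, 'o2, 'm2) qfun \<Rightarrow> bool" where
  "htp_equiv A B F G \<longleftrightarrow> (htp_sim A B)\<^sup>*\<^sup>* F G"

end

theory Submission
  imports Defs
begin

lemma catD:
  assumes "category C"
  shows "\<And>f. f\<in>Mor C \<Longrightarrow> Dom C f \<in> Ob C"
    "\<And>f. f\<in>Mor C \<Longrightarrow> Cod C f \<in> Ob C"
    "\<And>a. a\<in>Ob C \<Longrightarrow> Id C a \<in> Mor C"
    "\<And>a. a\<in>Ob C \<Longrightarrow> Dom C (Id C a) = a"
    "\<And>a. a\<in>Ob C \<Longrightarrow> Cod C (Id C a) = a"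
    "\<And>f g. f\<in>Mor C \<Longrightarrow> g\<in>Mor C \<Longrightarrow> Cod C f = Dom C g \<Longrightarrow> Comp C g f \<in> Mor C"
    "\<And>f g. f\<in>Mor C \<Longrightarrow> g\<in>Mor C \<Longrightarrow> Cod C f = Dom C g \<Longrightarrow> Dom C (Comp C g f) = Dom C f"
    "\<And>f g. f\<in>Mor C \<Longrightarrow> g\<in>Mor C \<Longrightarrow> Cod C f = Dom C g \<Longrightarrow> Cod C (Comp C g f) = Cod C g"
    "\<And>f. f\<in>Mor C \<Longrightarrow> Comp C f (Id C (Dom C f)) = f"
    "\<And>f. f\<in>Mor C \<Longrightarrow> Comp C (Id C (Cod C f)) f = f"
    "\<And>f g h. f\<in>Mor C \<Longrightarrow> g\<in>Mor C \<Longrightarrow> h\<in>Mor C \<Longrightarrow> Cod C f = Dom C g \<Longrightarrow> Cod C g = Dom C h \<Longrightarrow>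
        Comp C h (Comp C g f) = Comp C (Comp C h g) f"
  using assms unfolding category_def by blast+

lemma inv_unique:
  assumes "category C" "f \<in> Mor C" "is_inverse C f g" "is_inverse C f g'"
  shows "g = g'"
proof -
  note c = catD[OF assms(1)]
  have g: "g \<in> Mor C" "Dom C g = Cod C f" "Cod C g = Dom C f" "Comp C g f = Id C (Dom C f)"
    using assms(3) unfolding is_inverse_def by auto
  have g': "g' \<in> Mor C" "Dom C g' = Cod C f" "Cod C g' = Dom C f" "Comp C f g' = Id C (Cod C f)"
    using assms(4) unfolding is_inverse_def by auto
  have "g = Comp C g (Id C (Cod C f))" using c(9)[OF g(1)] g(2) by simp
  also have "\<dots> = Comp C g (Comp C f g')" using g' by simp
  also have "\<dots> = Comp C (Comp C g f) g'" using c(11)[OF g'(1) assms(2) g(1)] g g' by simp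
  also have "\<dots> = Comp C (Id C (Cod C g')) g'" using g g' by simp
  also have "\<dots> = g'" using c(10)[OF g'(1)] .
  finally show ?thesis .
qed

lemma ginv_is:
  assumes "groupoid C" "f \<in> Mor C"
  shows "is_inverse C f (ginv C f)"
proof -
  have cat: "category C" using assms unfolding groupoid_def by simp
  obtain g where g: "is_inverse C f g" using assms unfolding groupoid_def by blast
  have "\<exists>!g. is_inverse C f g" using g inv_unique[OF cat assms(2)] by blast
  then show ?thesis unfolding ginv_def by (rule theI')
qed

lemma ginvD:
  assumes "groupoid C" "f \<in> Mor C"
  shows "ginv C f \<in> Mor C" "Dom C (ginv C f) = Cod C f" "Cod C (ginv C f) = Dom C f"
    "Comp C (ginv C f) f = Id C (Dom C f)" "Comp C f (ginv C f) = Id C (Cod C f)"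
  using ginv_is[OF assms] unfolding is_inverse_def by auto

lemma ginv_eq:
  assumes "groupoid C" "f \<in> Mor C" "is_inverse C f g"
  shows "ginv C f = g"
  using inv_unique[OF _ assms(2) ginv_is[OF assms(1,2)] assms(3)] assms(1)
  unfolding groupoid_def by simp

lemma ginv_comp:
  assumes gr: "groupoid C" and a: "a \<in> Mor C" and b: "b \<in> Mor C" and e: "Cod C a = Cod C b"
  shows "ginv C (Comp C (ginv C a) b) = Comp C (ginv C b) a"
proof -
  have cat: "category C" using gr unfolding groupoid_def by simp
  note c = catD[OF cat]
  note ia = ginvD[OF gr a] and ib = ginvD[OF gr b]
  have m1: "Comp C (ginv C a) b \<in> Mor C" using c(6)[OF b ia(1)] ia e by simp
  have m2: "Comp C (ginv C b) a \<in> Mor C" using c(6)[OF a ib(1)] ib e by simp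
  have d1: "Dom C (Comp C (ginv C a) b) = Dom C b" "Cod C (Comp C (ginv C a) b) = Dom C a"
    using c(7,8)[OF b ia(1)] ia e by auto
  have d2: "Dom C (Comp C (ginv C b) a) = Dom C a" "Cod C (Comp C (ginv C b) a) = Dom C b"
    using c(7,8)[OF a ib(1)] ib e by auto
  have l: "Comp C (Comp C (ginv C b) a) (Comp C (ginv C a) b) = Id C (Dom C b)"
  proof -
    have "Comp C (Comp C (ginv C b) a) (Comp C (ginv C a) b)
        = Comp C (ginv C b) (Comp C a (Comp C (ginv C a) b))"
      using c(11)[OF m1 a ib(1)] d1 ib e by simp
    also have "Comp C a (Comp C (ginv C a) b) = Comp C (Comp C a (ginv C a)) b"
      using c(11)[OF b ia(1) a] ia e by simp
    also have "\<dots> = b" using ia(5) e c(10)[OF b] by simp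
    finally show ?thesis using ib(4) by simp
  qed
  have r: "Comp C (Comp C (ginv C a) b) (Comp C (ginv C b) a) = Id C (Dom C a)"
  proof -
    have "Comp C (Comp C (ginv C a) b) (Comp C (ginv C b) a)
        = Comp C (ginv C a) (Comp C b (Comp C (ginv C b) a))"
      using c(11)[OF m2 b ia(1)] d2 ia e by simp
    also have "Comp C b (Comp C (ginv C b) a) = Comp C (Comp C b (ginv C b)) a"
      using c(11)[OF a ib(1) b] ib e by simp
    also have "\<dots> = a" using ib(5) e c(10)[OF a] by simp
    finally show ?thesis using ia(4) by simp
  qed
  show ?thesis
    by (rule ginv_eq[OF gr m1]) (simp add: is_inverse_def m2 d1 d2 l r)
qed

lemma tMor: "(k, l) \<in> Mor (tilde_cat G) \<longleftrightarrow> k \<in> Mor G \<and> l \<in> Mor G \<and> Cod G k = Cod G l"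
  by (simp add: tilde_cat_def)

definition Rel :: "('o1, 'a) cat \<Rightarrow> ('o2, 'b) cat \<Rightarrow> ('a \<Rightarrow> 'b) \<Rightarrow> ('a \<Rightarrow> 'b) \<Rightarrow> bool" where
  "Rel G H X Y \<longleftrightarrow> (\<forall>k l. (k, l) \<in> Mor (tilde_cat G) \<longrightarrow> (Y k, X l) \<in> Mor (tilde_cat H)) \<and>
    (\<forall>k l k' l'. (k, l) \<in> Mor (tilde_cat G) \<longrightarrow> (k', l') \<in> Mor (tilde_cat G) \<longrightarrow>
       Comp G (ginv G k) l = Comp G (ginv G k') l' \<longrightarrow>
       Comp H (ginv H (Y k)) (X l) = Comp H (ginv H (Y k')) (X l'))"

lemma Rel_sym:
  assumes gG: "groupoid G" and gH: "groupoid H" and R: "Rel G H X Y"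
  shows "Rel G H Y X"
  unfolding Rel_def
proof (intro conjI allI impI)
  fix k l assume "(k, l) \<in> Mor (tilde_cat G)"
  then have "(l, k) \<in> Mor (tilde_cat G)" by (auto simp: tMor)
  then show "(X k, Y l) \<in> Mor (tilde_cat H)" using R unfolding Rel_def by (auto simp: tMor)
next
  fix k l k' l'
  assume kl: "(k, l) \<in> Mor (tilde_cat G)" and kl': "(k', l') \<in> Mor (tilde_cat G)"
    and e: "Comp G (ginv G k) l = Comp G (ginv G k') l'"
  have lk: "(l, k) \<in> Mor (tilde_cat G)" "(l', k') \<in> Mor (tilde_cat G)" using kl kl' by (auto simp: tMor)
  have "Comp G (ginv G l) k = Comp G (ginv G l') k'"
    using ginv_comp[OF gG, of k l] ginv_comp[OF gG, of k' l'] kl kl' e by (auto simp: tMor)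
  then have e2: "Comp H (ginv H (Y l)) (X k) = Comp H (ginv H (Y l')) (X k')"
    using R lk unfolding Rel_def by blast
  have m: "(Y l, X k) \<in> Mor (tilde_cat H)" "(Y l', X k') \<in> Mor (tilde_cat H)"
    using R lk unfolding Rel_def by blast+
  show "Comp H (ginv H (X k)) (Y l) = Comp H (ginv H (X k')) (Y l')"
    using arg_cong[OF e2, of "ginv H"] ginv_comp[OF gH, of "Y l" "X k"] ginv_comp[OF gH, of "Y l'" "X k'"] m
    by (auto simp: tMor)
qed

lemma comp_split:
  assumes gr: "groupoid C" and a: "a \<in> Mor C" and b: "b \<in> Mor C" and cc: "c \<in> Mor C"
    and e1: "Cod C a = Cod C b" and e2: "Cod C b = Cod C c"
  shows "Comp C (ginv C a) c = Comp C (Comp C (ginv C a) b) (Comp C (ginv C b) c)"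
proof -
  have cat: "category C" using gr unfolding groupoid_def by simp
  note cd = catD[OF cat]
  note ia = ginvD[OF gr a] and ib = ginvD[OF gr b]
  have m: "Comp C (ginv C b) c \<in> Mor C" using cd(6)[OF cc ib(1)] ib e2 by simp
  have d: "Cod C (Comp C (ginv C b) c) = Dom C b" using cd(8)[OF cc ib(1)] ib e2 by simp
  have "Comp C (Comp C (ginv C a) b) (Comp C (ginv C b) c)
      = Comp C (ginv C a) (Comp C b (Comp C (ginv C b) c))"
    using cd(11)[OF m b ia(1)] d ia e1 by simp
  also have "Comp C b (Comp C (ginv C b) c) = Comp C (Comp C b (ginv C b)) c"
    using cd(11)[OF cc ib(1) b] ib e2 by simp
  also have "\<dots> = c" using ib(5) e2 cd(10)[OF cc] by simp
  finally show ?thesis by simp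
qed

lemma Rel_trans:
  assumes gG: "groupoid G" and gH: "groupoid H" and R1: "Rel G H X Z" and R2: "Rel G H Z Y"
  shows "Rel G H X Y"
  unfolding Rel_def
proof (intro conjI allI impI)
  fix k l assume kl: "(k, l) \<in> Mor (tilde_cat G)"
  then have "(k, k) \<in> Mor (tilde_cat G)" by (auto simp: tMor)
  then show "(Y k, X l) \<in> Mor (tilde_cat H)" using R1 R2 kl unfolding Rel_def
    by (metis tMor)
next
  have cat: "category G" using gG unfolding groupoid_def by simp
  note cd = catD[OF cat]
  fix k l k' l'
  assume kl: "(k, l) \<in> Mor (tilde_cat G)" and kl': "(k', l') \<in> Mor (tilde_cat G)"
    and e: "Comp G (ginv G k) l = Comp G (ginv G k') l'"
  have ll: "(l, l) \<in> Mor (tilde_cat G)" "(l', l') \<in> Mor (tilde_cat G)" using kl kl' by (auto simp: tMor)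
  have "Dom G l = Dom G l'"
    using arg_cong[OF e, of "Dom G"] cd(7)[of l "ginv G k"] cd(7)[of l' "ginv G k'"]
      ginvD[OF gG, of k] ginvD[OF gG, of k'] kl kl' by (auto simp: tMor)
  then have "Comp G (ginv G l) l = Comp G (ginv G l') l'"
    using ginvD[OF gG, of l] ginvD[OF gG, of l'] kl kl' by (auto simp: tMor)
  then have E1: "Comp H (ginv H (Z l)) (X l) = Comp H (ginv H (Z l')) (X l')"
    using R1 ll unfolding Rel_def by blast
  have E2: "Comp H (ginv H (Y k)) (Z l) = Comp H (ginv H (Y k')) (Z l')"
    using R2 kl kl' e unfolding Rel_def by blast
  have a1: "(Y k, Z l) \<in> Mor (tilde_cat H)" "(Z l, X l) \<in> Mor (tilde_cat H)"
    "(Y k', Z l') \<in> Mor (tilde_cat H)" "(Z l', X l') \<in> Mor (tilde_cat H)"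
    using R1 R2 kl kl' ll unfolding Rel_def by blast+
  show "Comp H (ginv H (Y k)) (X l) = Comp H (ginv H (Y k')) (X l')"
    using comp_split[OF gH, of "Y k" "Z l" "X l"] comp_split[OF gH, of "Y k'" "Z l'" "X l'"] a1 E1 E2
    by (simp add: tMor)
qed

lemma tfun_map:
  assumes F: "is_functor (tilde_cat G) (tilde_cat H) F" and kl: "(k, l) \<in> Mor (tilde_cat G)"
  shows "snd F (k, l) = (fst F k, fst F l)" "(fst F k, fst F l) \<in> Mor (tilde_cat H)"
proof -
  have "snd F (k, l) \<in> Mor (tilde_cat H)" "Dom (tilde_cat H) (snd F (k, l)) = fst F l"
    "Cod (tilde_cat H) (snd F (k, l)) = fst F k"
    using F kl unfolding is_functor_def by (auto simp: tilde_cat_def)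
  then show "snd F (k, l) = (fst F k, fst F l)" "(fst F k, fst F l) \<in> Mor (tilde_cat H)"
    by (auto simp: tilde_cat_def)
qed

lemma gcomp_mor:
  assumes gG: "groupoid G" and kl: "(k, l) \<in> Mor (tilde_cat G)"
  shows "Comp G (ginv G k) l \<in> Mor G"
proof -
  have cat: "category G" using gG unfolding groupoid_def by simp
  show ?thesis using catD(6)[OF cat, of l "ginv G k"] ginvD[OF gG, of k] kl by (auto simp: tMor)
qed

lemma in_block: "(k, l) \<in> Mor (tilde_cat G) \<Longrightarrow> (k, l) \<in> tilde_block G (Comp G (ginv G k) l)"
  by (simp add: tilde_block_def)

lemma block_val:
  assumes "\<tau> \<in> snd (tildeS H)" "(a, b) \<in> \<tau>" "(a', b') \<in> \<tau>"
  shows "Comp H (ginv H a) b = Comp H (ginv H a') b'"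
  using assms by (auto simp: tildeS_def tilde_block_def)

lemma Rel_refl:
  assumes gG: "groupoid G" and M: "qs_morphism (tildeS G) (tildeS H) F"
  shows "Rel G H (fst F) (fst F)"
proof -
  have Fu: "is_functor (tilde_cat G) (tilde_cat H) F" using M by (simp add: qs_morphism_def tildeS_def)
  show ?thesis unfolding Rel_def
  proof (intro conjI allI impI)
    fix k l assume "(k, l) \<in> Mor (tilde_cat G)"
    then show "(fst F k, fst F l) \<in> Mor (tilde_cat H)" using tfun_map[OF Fu] by blast
  next
    fix k l k' l'
    assume kl: "(k, l) \<in> Mor (tilde_cat G)" and kl': "(k', l') \<in> Mor (tilde_cat G)"
      and e: "Comp G (ginv G k) l = Comp G (ginv G k') l'"
    let ?f = "Comp G (ginv G k) l"
    have "tilde_block G ?f \<in> snd (tildeS G)" using gcomp_mor[OF gG kl] by (auto simp: tildeS_def)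
    then obtain \<tau> where t: "\<tau> \<in> snd (tildeS H)" "snd F ` tilde_block G ?f \<subseteq> \<tau>"
      using M unfolding qs_morphism_def by blast
    have "(k, l) \<in> tilde_block G ?f" "(k', l') \<in> tilde_block G ?f"
      using in_block[OF kl] in_block[OF kl'] e by simp_all
    then have "snd F (k, l) \<in> \<tau>" "snd F (k', l') \<in> \<tau>" using t by blast+
    then have "(fst F k, fst F l) \<in> \<tau>" "(fst F k', fst F l') \<in> \<tau>"
      using tfun_map(1)[OF Fu kl] tfun_map(1)[OF Fu kl'] by simp_all
    then show "Comp H (ginv H (fst F k)) (fst F l) = Comp H (ginv H (fst F k')) (fst F l')"
      by (rule block_val[OF t(1)])
  qed
qed

lemma hom_Rel:
  assumes gG: "groupoid G" and Hm: "homotopy (tildeS G) (tildeS H) F1 F2 K"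
  shows "Rel G H (fst F1) (fst F2)"
proof -
  have Ku: "is_functor (prod_cat (tilde_cat G) one_cat) (tilde_cat H) K"
    and Kb: "\<forall>\<sigma>\<in>snd (prod_qs (tildeS G) I_qs). \<exists>\<tau>\<in>snd (tildeS H). snd K ` \<sigma> \<subseteq> \<tau>"
    and K0: "\<forall>a\<in>Mor G. fst K (a, False) = fst F1 a \<and> fst K (a, True) = fst F2 a"
  proof -
    have f1: "fst (prod_qs (tildeS G) I_qs) = prod_cat (tilde_cat G) one_cat"
      by (simp add: prod_qs_def tildeS_def I_qs_def)
    have f2: "fst (tildeS H) = tilde_cat H" "fst (tildeS G) = tilde_cat G" by (simp_all add: tildeS_def)
    have f3: "Ob (tilde_cat G) = Mor G" by (simp add: tilde_cat_def)
    show "is_functor (prod_cat (tilde_cat G) one_cat) (tilde_cat H) K"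
      "\<forall>\<sigma>\<in>snd (prod_qs (tildeS G) I_qs). \<exists>\<tau>\<in>snd (tildeS H). snd K ` \<sigma> \<subseteq> \<tau>"
      "\<forall>a\<in>Mor G. fst K (a, False) = fst F1 a \<and> fst K (a, True) = fst F2 a"
      using Hm unfolding homotopy_def qs_morphism_def f1 f2 f3 by blast+
  qed
  have key: "snd K ((k, l), (False, True)) = (fst F2 k, fst F1 l) \<and> (fst F2 k, fst F1 l) \<in> Mor (tilde_cat H)"
    if kl: "(k, l) \<in> Mor (tilde_cat G)" for k l
  proof -
    let ?m = "((k, l), (False, True))"
    have mm: "?m \<in> Mor (prod_cat (tilde_cat G) one_cat)" using kl by (simp add: prod_cat_def one_cat_def)
    have ob: "(l, False) \<in> Ob (prod_cat (tilde_cat G) one_cat)" "(k, True) \<in> Ob (prod_cat (tilde_cat G) one_cat)"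
      using kl by (auto simp: prod_cat_def one_cat_def tilde_cat_def)
    have "snd K ?m \<in> Mor (tilde_cat H)" "Dom (tilde_cat H) (snd K ?m) = fst K (l, False)"
      "Cod (tilde_cat H) (snd K ?m) = fst K (k, True)"
      using Ku mm unfolding is_functor_def by (auto simp: prod_cat_def one_cat_def tilde_cat_def)
    moreover have "fst K (l, False) = fst F1 l" "fst K (k, True) = fst F2 k" using K0 kl by (auto simp: tMor)
    ultimately show ?thesis by (auto simp: tilde_cat_def)
  qed
  show ?thesis unfolding Rel_def
  proof (intro conjI allI impI)
    fix k l assume "(k, l) \<in> Mor (tilde_cat G)"
    then show "(fst F2 k, fst F1 l) \<in> Mor (tilde_cat H)" using key by blast
  next
    fix k l k' l'
    assume kl: "(k, l) \<in> Mor (tilde_cat G)" and kl': "(k', l') \<in> Mor (tilde_cat G)"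
      and e: "Comp G (ginv G k) l = Comp G (ginv G k') l'"
    let ?f = "Comp G (ginv G k) l"
    let ?s = "tilde_block G ?f \<times> {(False, True)}"
    have "?s \<in> snd (prod_qs (tildeS G) I_qs)" using gcomp_mor[OF gG kl]
      unfolding prod_qs_def tildeS_def I_qs_def by (auto simp: one_cat_def)
    then obtain \<tau> where t: "\<tau> \<in> snd (tildeS H)" "snd K ` ?s \<subseteq> \<tau>"
      using Kb by blast
    have "((k, l), (False, True)) \<in> ?s" "((k', l'), (False, True)) \<in> ?s"
      using in_block[OF kl] in_block[OF kl'] e by simp_all
    then have "snd K ((k, l), (False, True)) \<in> \<tau>" "snd K ((k', l'), (False, True)) \<in> \<tau>" using t by blast+
    then have "(fst F2 k, fst F1 l) \<in> \<tau>" "(fst F2 k', fst F1 l') \<in> \<tau>"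
      using key[OF kl] key[OF kl'] by simp_all
    then show "Comp H (ginv H (fst F2 k)) (fst F1 l) = Comp H (ginv H (fst F2 k')) (fst F1 l')"
      by (rule block_val[OF t(1)])
  qed
qed

lemma block_lemma:
  assumes gG: "groupoid G" and gH: "groupoid H" and R: "Rel G H X Y" and f: "f \<in> Mor G"
  shows "\<exists>\<tau>\<in>snd (tildeS H). \<forall>k l. (k, l) \<in> tilde_block G f \<longrightarrow> (Y k, X l) \<in> \<tau>"
proof -
  have cat: "category G" using gG unfolding groupoid_def by simp
  note cd = catD[OF cat]
  define c where "c = Cod G f"
  have c: "c \<in> Ob G" using cd(2)[OF f] c_def by simp
  have k0: "(Id G c, f) \<in> Mor (tilde_cat G)" using cd(3,5)[OF c] f c_def by (simp add: tMor)
  have "is_inverse G (Id G c) (Id G c)"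
    using cd(3,4,5)[OF c] cd(9)[OF cd(3)[OF c]] unfolding is_inverse_def by simp
  then have gi: "ginv G (Id G c) = Id G c" using ginv_eq[OF gG cd(3)[OF c]] by simp
  have e0: "Comp G (ginv G (Id G c)) f = f" using gi cd(10)[OF f] c_def by simp
  define f' where "f' = Comp H (ginv H (Y (Id G c))) (X f)"
  have m0: "(Y (Id G c), X f) \<in> Mor (tilde_cat H)" using R k0 unfolding Rel_def by blast
  have f'm: "f' \<in> Mor H" using gcomp_mor[OF gH m0] f'_def by simp
  have "\<forall>k l. (k, l) \<in> tilde_block G f \<longrightarrow> (Y k, X l) \<in> tilde_block H f'"
  proof (intro allI impI)
    fix k l assume "(k, l) \<in> tilde_block G f"
    then have kl: "(k, l) \<in> Mor (tilde_cat G)" and e: "Comp G (ginv G k) l = f"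
      by (auto simp: tilde_block_def)
    have "Comp H (ginv H (Y k)) (X l) = f'"
      using R kl k0 e e0 unfolding Rel_def f'_def by metis
    moreover have "(Y k, X l) \<in> Mor (tilde_cat H)" using R kl unfolding Rel_def by blast
    ultimately show "(Y k, X l) \<in> tilde_block H f'" by (simp add: tilde_block_def)
  qed
  moreover have "tilde_block H f' \<in> snd (tildeS H)" using f'm by (auto simp: tildeS_def)
  ultimately show ?thesis by blast
qed

definition XX :: "('a, 'a \<times> 'a, 'b, 'b \<times> 'b) qfun \<Rightarrow> ('a, 'a \<times> 'a, 'b, 'b \<times> 'b) qfun \<Rightarrow> bool \<Rightarrow> 'a \<Rightarrow> 'b" where
  "XX F1 F2 b = (if b then fst F2 else fst F1)"

definition KK :: "('a, 'a \<times> 'a, 'b, 'b \<times> 'b) qfun \<Rightarrow> ('a, 'a \<times> 'a, 'b, 'b \<times> 'b) qfun \<Rightarrow>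
    ('a \<times> bool, ('a \<times> 'a) \<times> (bool \<times> bool), 'b, 'b \<times> 'b) qfun" where
  "KK F1 F2 = (\<lambda>(g, b). XX F1 F2 b g, \<lambda>((k, l), (a, b)). (XX F1 F2 b k, XX F1 F2 a l))"

lemma Rel_hom:
  assumes gG: "groupoid G" and gH: "groupoid H"
    and M1: "qs_morphism (tildeS G) (tildeS H) F1" and M2: "qs_morphism (tildeS G) (tildeS H) F2"
    and R: "Rel G H (fst F1) (fst F2)"
  shows "homotopy (tildeS G) (tildeS H) F1 F2 (KK F1 F2)"
proof -
  have RX: "Rel G H (XX F1 F2 a) (XX F1 F2 b)" if "a \<le> b" for a b
    using that R Rel_refl[OF gG M1] Rel_refl[OF gG M2] by (cases a; cases b) (auto simp: XX_def)
  have R1: "(XX F1 F2 b k, XX F1 F2 a l) \<in> Mor (tilde_cat H)"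
    if "(k, l) \<in> Mor (tilde_cat G)" "a \<le> b" for k l a b
    using RX[OF that(2)] that(1) unfolding Rel_def by blast
  have Fu1: "is_functor (tilde_cat G) (tilde_cat H) F1" using M1 by (simp add: qs_morphism_def tildeS_def)
  have f1: "fst (prod_qs (tildeS G) I_qs) = prod_cat (tilde_cat G) one_cat"
    by (simp add: prod_qs_def tildeS_def I_qs_def)
  have f2: "fst (tildeS H) = tilde_cat H" "fst (tildeS G) = tilde_cat G" by (simp_all add: tildeS_def)
  have f3: "Ob (tilde_cat G) = Mor G" by (simp add: tilde_cat_def)
  let ?P = "prod_cat (tilde_cat G) one_cat"
  have i1: "\<forall>x\<in>Ob ?P. fst (KK F1 F2) x \<in> Ob (tilde_cat H)"
  proof
    fix x assume "x \<in> Ob ?P"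
    then obtain g b where x: "x = (g, b)" "g \<in> Mor G" by (auto simp: prod_cat_def tilde_cat_def)
    then have "(g, g) \<in> Mor (tilde_cat G)" by (simp add: tMor)
    from R1[OF this order_refl[of b]] show "fst (KK F1 F2) x \<in> Ob (tilde_cat H)"
      using x by (auto simp: KK_def tilde_cat_def)
  qed
  have i2: "\<forall>x\<in>Mor ?P. snd (KK F1 F2) x \<in> Mor (tilde_cat H) \<and>
       Dom (tilde_cat H) (snd (KK F1 F2) x) = fst (KK F1 F2) (Dom ?P x) \<and>
       Cod (tilde_cat H) (snd (KK F1 F2) x) = fst (KK F1 F2) (Cod ?P x)"
  proof
    fix x assume "x \<in> Mor ?P"
    then obtain k l a b where x: "x = ((k, l), (a, b))" "(k, l) \<in> Mor (tilde_cat G)" "a \<le> b"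
      by (auto simp: prod_cat_def one_cat_def)
    from R1[OF x(2,3)] x
    show "snd (KK F1 F2) x \<in> Mor (tilde_cat H) \<and>
       Dom (tilde_cat H) (snd (KK F1 F2) x) = fst (KK F1 F2) (Dom ?P x) \<and>
       Cod (tilde_cat H) (snd (KK F1 F2) x) = fst (KK F1 F2) (Cod ?P x)"
      by (simp add: KK_def prod_cat_def one_cat_def tilde_cat_def)
  qed
  have i3: "\<forall>x\<in>Ob ?P. snd (KK F1 F2) (Id ?P x) = Id (tilde_cat H) (fst (KK F1 F2) x)"
  proof
    fix x assume "x \<in> Ob ?P"
    obtain g b where x: "x = (g, b)" by (cases x) auto
    show "snd (KK F1 F2) (Id ?P x) = Id (tilde_cat H) (fst (KK F1 F2) x)"
      using x by (simp add: KK_def prod_cat_def one_cat_def tilde_cat_def)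
  qed
  have i4: "\<forall>x\<in>Mor ?P. \<forall>y\<in>Mor ?P. Cod ?P x = Dom ?P y \<longrightarrow>
      snd (KK F1 F2) (Comp ?P y x) = Comp (tilde_cat H) (snd (KK F1 F2) y) (snd (KK F1 F2) x)"
  proof (intro ballI impI)
    fix x y assume "x \<in> Mor ?P" "y \<in> Mor ?P" and "Cod ?P x = Dom ?P y"
    then obtain k l a b k' l' a' b' where x: "x = ((k, l), (a, b))" "y = ((k', l'), (a', b'))"
      "l' = k" "a' = b"
      by (cases x, cases y) (auto simp: prod_cat_def one_cat_def tilde_cat_def)
    show "snd (KK F1 F2) (Comp ?P y x) = Comp (tilde_cat H) (snd (KK F1 F2) y) (snd (KK F1 F2) x)"
      using x by (simp add: KK_def prod_cat_def one_cat_def tilde_cat_def)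
  qed
  have isf: "is_functor (prod_cat (tilde_cat G) one_cat) (tilde_cat H) (KK F1 F2)"
    unfolding is_functor_def using i1 i2 i3 i4 by blast
  have blk: "\<forall>\<sigma>\<in>snd (prod_qs (tildeS G) I_qs). \<exists>\<tau>\<in>snd (tildeS H). snd (KK F1 F2) ` \<sigma> \<subseteq> \<tau>"
  proof
    fix \<sigma> assume "\<sigma> \<in> snd (prod_qs (tildeS G) I_qs)"
    then obtain f a b where s: "\<sigma> = tilde_block G f \<times> {(a, b)}" "f \<in> Mor G" "a \<le> b"
      by (auto simp: prod_qs_def tildeS_def I_qs_def one_cat_def)
    obtain \<tau> where t: "\<tau> \<in> snd (tildeS H)"
      "\<forall>k l. (k, l) \<in> tilde_block G f \<longrightarrow> (XX F1 F2 b k, XX F1 F2 a l) \<in> \<tau>"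
      using block_lemma[OF gG gH RX[OF s(3)] s(2)] by blast
    have "snd (KK F1 F2) ` \<sigma> \<subseteq> \<tau>"
    proof
      fix y assume "y \<in> snd (KK F1 F2) ` \<sigma>"
      then obtain k l where "(k, l) \<in> tilde_block G f" "y = snd (KK F1 F2) ((k, l), (a, b))"
        using s(1) by auto
      then show "y \<in> \<tau>" using t(2) by (simp add: KK_def)
    qed
    then show "\<exists>\<tau>\<in>snd (tildeS H). snd (KK F1 F2) ` \<sigma> \<subseteq> \<tau>" using t(1) by blast
  qed
  have eqs: "\<forall>f\<in>Mor (tilde_cat G). snd (KK F1 F2) (f, Id one_cat False) = snd F1 f \<and>
      snd (KK F1 F2) (f, Id one_cat True) = snd F2 f"
  proof
    fix f assume "f \<in> Mor (tilde_cat G)"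
    then obtain k l where f: "f = (k, l)" "(k, l) \<in> Mor (tilde_cat G)" by (cases f) auto
    have Fu2: "is_functor (tilde_cat G) (tilde_cat H) F2" using M2 by (simp add: qs_morphism_def tildeS_def)
    show "snd (KK F1 F2) (f, Id one_cat False) = snd F1 f \<and> snd (KK F1 F2) (f, Id one_cat True) = snd F2 f"
      using tfun_map(1)[OF Fu1 f(2)] tfun_map(1)[OF Fu2 f(2)] f(1)
      by (simp add: KK_def XX_def one_cat_def)
  qed
  show ?thesis unfolding homotopy_def qs_morphism_def f1 f2 f3
    using isf blk eqs by (simp add: KK_def XX_def)
qed

theorem proposition4p10:
  fixes G :: "('o1, 'a) cat" and H :: "('o2, 'b) cat"
    and \<phi> \<psi> :: "('a, 'a \<times> 'a, 'b, 'b \<times> 'b) qfun"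
  assumes "groupoid G" and "groupoid H"
    and "qs_morphism (tildeS G) (tildeS H) \<phi>"
    and "qs_morphism (tildeS G) (tildeS H) \<psi>"
  shows "htp_equiv (tildeS G) (tildeS H) \<phi> \<psi> \<longleftrightarrow>
         (\<exists>K. homotopy (tildeS G) (tildeS H) \<phi> \<psi> K)"
proof
  assume "htp_equiv (tildeS G) (tildeS H) \<phi> \<psi>"
  then have "(htp_sim (tildeS G) (tildeS H))\<^sup>*\<^sup>* \<phi> \<psi>" by (simp add: htp_equiv_def)
  then have "Rel G H (fst \<phi>) (fst \<psi>)"
  proof (induction rule: rtranclp_induct)
    case base
    then show ?case using Rel_refl[OF assms(1,3)] .
  next
    case (step y z)
    have "Rel G H (fst y) (fst z)"
      using step.hyps(2) unfolding htp_sim_def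
      using hom_Rel[OF assms(1)] Rel_sym[OF assms(1,2)] by blast
    then show ?case using Rel_trans[OF assms(1,2) step.IH] by blast
  qed
  then show "\<exists>K. homotopy (tildeS G) (tildeS H) \<phi> \<psi> K"
    using Rel_hom[OF assms] by blast
next
  assume "\<exists>K. homotopy (tildeS G) (tildeS H) \<phi> \<psi> K"
  then have "htp_sim (tildeS G) (tildeS H) \<phi> \<psi>" by (simp add: htp_sim_def)
  then show "htp_equiv (tildeS G) (tildeS H) \<phi> \<psi>" by (simp add: htp_equiv_def)
qed

end
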